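(* Let $Y,Z$ be random variables with standard alphabets $(A_Y,\mathcal B_{A_Y})$, $(A_Z,\mathcal B_{A_Z})$, let $T:A_Y\times A_Z\to A_X$ be measurable with $(A_X,\mathcal B_{A_X})$ standard, and let $X=T(Y,Z)$. Partition $A_Z=A_Z^0\cup A_Z^{\mathrm{atomic}}\cup A_Z^{\mathrm{continuous}}$, where $A_Z^0$ is the set of $z$ for which $P_{X_z}=\mathbb P(X\in\cdot\,|Z=z)$ is concentrated on a single point; $A_Z^{\mathrm{atomic}}$ is the set of $z$ for which $P_{X_z}(B_X)=1$ for some at most countable, non-singleton $B_X\in\mathcal B_{A_X}$ (and $P_{X_z}$ is not concentrated on a single point); and $A_Z^{\mathrm{continuous}}$ is the set of $z$ for which there is $B_X\in\mathcal B_{A_X}$ with $P_{X_z}(B_X)>0$ and $P_{X_z}(\{x\})=0$ for all $x\in B_X$. Then \[I(X;Y|Z)=\begin{cases}\displaystyle\int_{A_Z^{\mathrm{atomic}}}I(X_z;Y_z)\,\mathrm dP_Z(z) & \text{if } P_Z(A_Z^{\mathrm{continuous}})=0,\\ \infty & \text{otherwise.}\end{cases}\] In particular, if $P_Z(A_Z^0)=1$ then $I(X;Y|Z)=0$.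
   Context: $P_f$ denotes the distribution of a random variable $f$. A standard measurable space is one isomorphic via a bi-measurable bijection to a Borel subset of a Polish space (so regular conditional probabilities and disintegrations exist). $\mathrm{KL}(P\|M)=\int\ln\frac{\mathrm dP}{\mathrm dM}\,\mathrm dP$ if $P\ll M$ and $\infty$ otherwise; $I(X;Y)=\mathrm{KL}(P_{XY}\|P_X\otimes P_Y)$. The measure $P_{X\times Y|Z}$ is defined by $P_{X\times Y|Z}(B_X\times B_Y\times B_Z)=\int_{B_Z}\mathbb P(X\in B_X|Z=z)\mathbb P(Y\in B_Y|Z=z)\,\mathrm dP_Z(z)$ with regular conditional distributions, and $I(X;Y|Z)=\mathrm{KL}(P_{XYZ}\|P_{X\times Y|Z})$. For $z\in A_Z$, the $Z$-conditioned random variables $X_z,Y_z$ have joint distribution $(P_{XYZ})_z$, the disintegration of $P_{XYZ}$ with respect to $P_Z$, i.e. $(P_{XYZ})_z(B_X\times B_Y)=\mathbb P(X\in B_X,Y\in B_Y|Z=z)$; their marginals are $P_{X_z}=\mathbb P(X\in\cdot|Z=z)$ and $P_{Y_z}=\mathbb P(Y\in\cdot|Z=z)$. (For instance, with transfer entropy $T_{U\to V,t}=I(V_{t+1};U_t|V_t)$ and $V_{t+1}=T(U_t,V_t)$, this gives $T_{U\to V,t}=\infty$ whenever $\mathbb P(V_{t+1}\in\cdot|V_t=v)$ charges an atomless continuum for a positive-measure set of $v$.) *)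

theory Defs
  imports "HOL-Probability.Probability"
begin

text \<open>Standard measurable space: bi-measurable bijection onto a Borel subset of a Polish
  space. The Polish space is represented by a type of class polish_space; in the main
  theorem the type is a free (hence effectively existentially quantified) type variable.\<close>
definition standard_via :: "'a measure \<Rightarrow> ('a \<Rightarrow> 'p::polish_space) \<Rightarrow> bool" where
  "standard_via M f \<longleftrightarrow>
     f ` space M \<in> sets (borel :: 'p measure) \<and>
     bij_betw f (space M) (f ` space M) \<and>
     f \<in> M \<rightarrow>\<^sub>M borel \<and>
     the_inv_into (space M) f \<in> restrict_space borel (f ` space M) \<rightarrow>\<^sub>M M"

definition KL :: "'a measure \<Rightarrow> 'a measure \<Rightarrow> ereal" where
  "KL P Q =
    (if sets P = sets Q \<and> absolutely_continuous Q P then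
       enn2ereal (\<integral>\<^sup>+ x. ennreal (max 0 (ln (enn2real (RN_deriv Q P x)))) \<partial>P)
       - enn2ereal (\<integral>\<^sup>+ x. ennreal (max 0 (- ln (enn2real (RN_deriv Q P x)))) \<partial>P)
     else \<infinity>)"

definition MI :: "'x measure \<Rightarrow> 'y measure \<Rightarrow> ('x \<times> 'y) measure \<Rightarrow> ereal" where
  "MI MX MY J = KL J (distr J MX fst \<Otimes>\<^sub>M distr J MY snd)"

text \<open>P_{X x Y | Z} built from the conditional law kernel K (z |-> law of (X,Y) given Z = z)
  and the law PZ of Z: rectangles BX x BY x BZ get mass int_BZ K_X(z)(BX) K_Y(z)(BY) dPZ.\<close>
definition cond_prod_measure ::
  "'x measure \<Rightarrow> 'y measure \<Rightarrow> 'z measure \<Rightarrow> 'z measure \<Rightarrow> ('z \<Rightarrow> ('x \<times> 'y) measure)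
     \<Rightarrow> (('x \<times> 'y) \<times> 'z) measure" where
  "cond_prod_measure MX MY MZ PZ K =
     PZ \<bind> (\<lambda>z. distr (distr (K z) MX fst \<Otimes>\<^sub>M distr (K z) MY snd)
                        ((MX \<Otimes>\<^sub>M MY) \<Otimes>\<^sub>M MZ) (\<lambda>xy. (xy, z)))"

end

theory Submission
  imports Defs
begin


lemma pred_eq_std:
  assumes std: "standard_via MX (fX :: 'x \<Rightarrow> 'p::polish_space)"
    and f: "f \<in> N \<rightarrow>\<^sub>M MX" and g: "g \<in> N \<rightarrow>\<^sub>M MX"
  shows "{w \<in> space N. f w = g w} \<in> sets N"
proof -
  have fX: "fX \<in> MX \<rightarrow>\<^sub>M borel" and inj: "inj_on fX (space MX)"
    using std unfolding standard_via_def bij_betw_def by auto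
  have "{w \<in> space N. f w = g w} = {w \<in> space N. fX (f w) = fX (g w)}"
    using inj measurable_space[OF f] measurable_space[OF g] by (auto dest: inj_onD)
  also have "\<dots> \<in> sets N"
    by (rule measurable_equality_set) (auto intro: measurable_compose[OF f fX] measurable_compose[OF g fX])
  finally show ?thesis .
qed

locale tsetup =
  fixes M :: "'w measure"
    and MX :: "'x measure" and MY :: "'y measure" and MZ :: "'z measure"
    and X :: "'w \<Rightarrow> 'x" and Y :: "'w \<Rightarrow> 'y" and Z :: "'w \<Rightarrow> 'z"
    and T :: "'y \<times> 'z \<Rightarrow> 'x"
    and fX :: "'x \<Rightarrow> 'px::polish_space"
    and K :: "'z \<Rightarrow> ('x \<times> 'y) measure"
  assumes M: "prob_space M"
    and stdX: "standard_via MX fX"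
    and Y_rv[measurable]: "Y \<in> M \<rightarrow>\<^sub>M MY" and Z_rv[measurable]: "Z \<in> M \<rightarrow>\<^sub>M MZ"
    and T_meas[measurable]: "T \<in> MY \<Otimes>\<^sub>M MZ \<rightarrow>\<^sub>M MX"
    and X_def: "\<forall>\<omega>\<in>space M. X \<omega> = T (Y \<omega>, Z \<omega>)"
    and K_meas[measurable]: "K \<in> MZ \<rightarrow>\<^sub>M prob_algebra (MX \<Otimes>\<^sub>M MY)"
    and K_disint: "\<forall>B\<in>sets (MX \<Otimes>\<^sub>M MY). \<forall>C\<in>sets MZ.
        emeasure M {\<omega>\<in>space M. (X \<omega>, Y \<omega>) \<in> B \<and> Z \<omega> \<in> C}
          = (\<integral>\<^sup>+ z. emeasure (K z) B * indicator C z \<partial>distr M MZ Z)"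
begin

lemma pred_eqX:
  "f \<in> N \<rightarrow>\<^sub>M MX \<Longrightarrow> g \<in> N \<rightarrow>\<^sub>M MX \<Longrightarrow> Measurable.pred N (\<lambda>w. f w = g w)"
  unfolding pred_def using pred_eq_std[OF stdX] by blast

lemma X_rv[measurable]: "X \<in> M \<rightarrow>\<^sub>M MX"
proof -
  have "(\<lambda>\<omega>. T (Y \<omega>, Z \<omega>)) \<in> M \<rightarrow>\<^sub>M MX" by measurable
  then show ?thesis
    by (rule measurable_cong[THEN iffD2, rotated]) (simp add: X_def)
qed

definition "KX z = distr (K z) MX fst"
definition "KY z = distr (K z) MY snd"
definition "a z x = emeasure (KX z) {x}"
definition "PZ = distr M MZ Z"
abbreviation "S \<equiv> (MX \<Otimes>\<^sub>M MY) \<Otimes>\<^sub>M MZ"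

lemma K_sub[measurable]: "K \<in> MZ \<rightarrow>\<^sub>M subprob_algebra (MX \<Otimes>\<^sub>M MY)"
  using K_meas by (rule measurable_prob_algebraD)

lemma K_space: "z \<in> space MZ \<Longrightarrow> prob_space (K z) \<and> sets (K z) = sets (MX \<Otimes>\<^sub>M MY)"
  using measurable_space[OF K_meas] by (auto simp: space_prob_algebra)

lemma KX_meas[measurable]: "KX \<in> MZ \<rightarrow>\<^sub>M prob_algebra MX"
  unfolding KX_def by (rule measurable_compose[OF K_meas measurable_distr_prob_space]) simp

lemma KY_meas[measurable]: "KY \<in> MZ \<rightarrow>\<^sub>M prob_algebra MY"
  unfolding KY_def by (rule measurable_compose[OF K_meas measurable_distr_prob_space]) simp

lemma KX_space: "z \<in> space MZ \<Longrightarrow> prob_space (KX z) \<and> sets (KX z) = sets MX"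
  using measurable_space[OF KX_meas] by (auto simp: space_prob_algebra)

lemma KY_space: "z \<in> space MZ \<Longrightarrow> prob_space (KY z) \<and> sets (KY z) = sets MY"
  using measurable_space[OF KY_meas] by (auto simp: space_prob_algebra)

lemma sing_sets: "x \<in> space MX \<Longrightarrow> {x} \<in> sets MX"
proof -
  assume x: "x \<in> space MX"
  have "Measurable.pred MX (\<lambda>w. w = x)"
  proof (rule pred_eqX)
    show "(\<lambda>w. w) \<in> MX \<rightarrow>\<^sub>M MX" by (rule measurable_ident_sets) simp
    show "(\<lambda>w. x) \<in> MX \<rightarrow>\<^sub>M MX" using x by simp
  qed
  then have "{w \<in> space MX. w = x} \<in> sets MX" by (simp add: pred_def)
  moreover have "{w \<in> space MX. w = x} = {x}" using x by auto
  ultimately show ?thesis by simp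
qed

lemma a_meas[measurable]: "(\<lambda>(z, x). a z x) \<in> borel_measurable (MZ \<Otimes>\<^sub>M MX)"
proof -
  have "(\<lambda>w. \<integral>\<^sup>+ x'. indicator {x'. x' = snd w} x' \<partial>KX (fst w)) \<in> borel_measurable (MZ \<Otimes>\<^sub>M MX)"
  proof (rule nn_integral_measurable_subprob_algebra2[where N=MX])
    have "{p \<in> space ((MZ \<Otimes>\<^sub>M MX) \<Otimes>\<^sub>M MX). snd p = snd (fst p)} \<in> sets ((MZ \<Otimes>\<^sub>M MX) \<Otimes>\<^sub>M MX)"
      by (rule pred_eq_std[OF stdX]) measurable
    then have "indicator {p \<in> space ((MZ \<Otimes>\<^sub>M MX) \<Otimes>\<^sub>M MX). snd p = snd (fst p)} \<in> borel_measurable ((MZ \<Otimes>\<^sub>M MX) \<Otimes>\<^sub>M MX)"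
      by (rule borel_measurable_indicator)
    then show "(\<lambda>(w, x'). indicator {x'. x' = snd w} x' :: ennreal) \<in> borel_measurable ((MZ \<Otimes>\<^sub>M MX) \<Otimes>\<^sub>M MX)"
      by (rule measurable_cong[THEN iffD1, rotated]) (auto simp: indicator_def)
    show "(\<lambda>w. KX (fst w)) \<in> MZ \<Otimes>\<^sub>M MX \<rightarrow>\<^sub>M subprob_algebra MX"
      by (rule measurable_prob_algebraD) measurable
  qed
  then show ?thesis
  proof (rule measurable_cong[THEN iffD1, rotated])
    fix w assume w: "w \<in> space (MZ \<Otimes>\<^sub>M MX)"
    then have "snd w \<in> space MX" "fst w \<in> space MZ" by (auto simp: space_pair_measure)
    then show "(\<integral>\<^sup>+ x'. indicator {x'. x' = snd w} x' \<partial>KX (fst w)) = (case w of (z, x) \<Rightarrow> a z x)"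
      using KX_space sing_sets by (cases w) (auto simp: a_def)
  qed
qed

end

context tsetup begin

definition "P = distr M S (\<lambda>\<omega>. ((X \<omega>, Y \<omega>), Z \<omega>))"
definition "Kemb z = distr (K z) S (\<lambda>xy. (xy, z))"
definition "Qemb z = distr (KX z \<Otimes>\<^sub>M KY z) S (\<lambda>xy. (xy, z))"

lemma XYZ_meas[measurable]: "(\<lambda>\<omega>. ((X \<omega>, Y \<omega>), Z \<omega>)) \<in> M \<rightarrow>\<^sub>M S"
  by measurable

lemma Kemb_meas[measurable]: "Kemb \<in> MZ \<rightarrow>\<^sub>M prob_algebra S"
  unfolding Kemb_def by (rule measurable_distr_prob_space2[OF K_meas]) measurable

lemma Qemb_meas[measurable]: "Qemb \<in> MZ \<rightarrow>\<^sub>M prob_algebra S"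
  unfolding Qemb_def by (rule measurable_distr_prob_space2[OF measurable_pair_prob[OF KX_meas KY_meas]]) measurable

lemma PZ_prob: "PZ \<in> space (prob_algebra MZ)"
  unfolding PZ_def space_prob_algebra
  using prob_space.prob_space_distr[OF M Z_rv] by simp

lemma space_PZ[simp]: "space PZ = space MZ" and sets_PZ[simp]: "sets PZ = sets MZ"
  unfolding PZ_def by auto

lemma P_prob: "prob_space P"
  unfolding P_def using prob_space.prob_space_distr[OF M XYZ_meas] .

lemma PZ_cong: "measurable PZ N = measurable MZ N"
  by (rule measurable_cong_sets) auto

lemma Kemb_sub: "Kemb \<in> PZ \<rightarrow>\<^sub>M subprob_algebra S"
  unfolding PZ_cong by (rule measurable_prob_algebraD[OF Kemb_meas])

lemma Qemb_sub: "Qemb \<in> PZ \<rightarrow>\<^sub>M subprob_algebra S"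
  unfolding PZ_cong by (rule measurable_prob_algebraD[OF Qemb_meas])

lemma sets_P[simp]: "sets P = sets S" unfolding P_def by simp

lemma P_eq: "P = PZ \<bind> Kemb"
proof (rule measure_eqI_generator_eq[OF Int_stable_pair_measure_generator[of "MX \<Otimes>\<^sub>M MY" MZ]])
  show "{a \<times> b |a b. a \<in> sets (MX \<Otimes>\<^sub>M MY) \<and> b \<in> sets MZ} \<subseteq> Pow (space (MX \<Otimes>\<^sub>M MY) \<times> space MZ)"
    by (auto dest: sets.sets_into_space[of _ "MX \<Otimes>\<^sub>M MY"] sets.sets_into_space[of _ MZ])
  show "sets P = sigma_sets (space (MX \<Otimes>\<^sub>M MY) \<times> space MZ) {a \<times> b |a b. a \<in> sets (MX \<Otimes>\<^sub>M MY) \<and> b \<in> sets MZ}"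
    by (simp add: sets_pair_measure[of "MX \<Otimes>\<^sub>M MY" MZ])
  show "sets (PZ \<bind> Kemb) = sigma_sets (space (MX \<Otimes>\<^sub>M MY) \<times> space MZ) {a \<times> b |a b. a \<in> sets (MX \<Otimes>\<^sub>M MY) \<and> b \<in> sets MZ}"
  proof -
    have "sets (PZ \<bind> Kemb) = sets S" by (rule sets_bind'[OF PZ_prob Kemb_meas])
    then show ?thesis by (simp add: sets_pair_measure[of "MX \<Otimes>\<^sub>M MY" MZ])
  qed
  show "range (\<lambda>i. space (MX \<Otimes>\<^sub>M MY) \<times> space MZ) \<subseteq> {a \<times> b |a b. a \<in> sets (MX \<Otimes>\<^sub>M MY) \<and> b \<in> sets MZ}"
    by blast
  show "(\<Union>i. space (MX \<Otimes>\<^sub>M MY) \<times> space MZ) = space (MX \<Otimes>\<^sub>M MY) \<times> space MZ" by simp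
  show "emeasure P (space (MX \<Otimes>\<^sub>M MY) \<times> space MZ) \<noteq> \<infinity>" for i :: nat
    using finite_measure.emeasure_finite[OF prob_space.finite_measure[OF P_prob]] by simp
next
  fix A assume "A \<in> {a \<times> b |a b. a \<in> sets (MX \<Otimes>\<^sub>M MY) \<and> b \<in> sets MZ}"
  then obtain B C where A: "A = B \<times> C" and B: "B \<in> sets (MX \<Otimes>\<^sub>M MY)" and C: "C \<in> sets MZ" by blast
  have "emeasure P A = emeasure M {\<omega>\<in>space M. (X \<omega>, Y \<omega>) \<in> B \<and> Z \<omega> \<in> C}"
    unfolding P_def A using B C
    by (subst emeasure_distr) (auto intro!: arg_cong[where f="emeasure M"])
  also have "\<dots> = (\<integral>\<^sup>+ z. emeasure (K z) B * indicator C z \<partial>PZ)"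
    using K_disint B C by (simp add: PZ_def)
  also have "\<dots> = (\<integral>\<^sup>+ z. emeasure (Kemb z) A \<partial>PZ)"
  proof (rule nn_integral_cong)
    fix z assume z: "z \<in> space PZ"
    then have sK: "sets (K z) = sets (MX \<Otimes>\<^sub>M MY)" using K_space by simp
    then have spK: "space (K z) = space (MX \<Otimes>\<^sub>M MY)" by (rule sets_eq_imp_space_eq)
    have Bs: "B \<subseteq> space (MX \<Otimes>\<^sub>M MY)" using B sets.sets_into_space by blast
    have "emeasure (Kemb z) A = emeasure (K z) ((\<lambda>xy. (xy, z)) -` A \<inter> space (K z))"
      unfolding Kemb_def using z B C A sK
      by (subst emeasure_distr) (auto simp: measurable_cong_sets[OF sK refl])
    also have "(\<lambda>xy. (xy, z)) -` A \<inter> space (K z) = (if z \<in> C then B else {})"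
      using Bs spK A by auto
    finally show "emeasure (K z) B * indicator C z = emeasure (Kemb z) A"
      by (simp add: indicator_def)
  qed
  also have "\<dots> = emeasure (PZ \<bind> Kemb) A"
    using A B C by (subst emeasure_bind_prob_algebra[OF PZ_prob Kemb_meas]) auto
  finally show "emeasure P A = emeasure (PZ \<bind> Kemb) A" .
qed

definition "Q = cond_prod_measure MX MY MZ PZ K"

lemma Q_eq: "Q = PZ \<bind> Qemb"
  unfolding Q_def cond_prod_measure_def Qemb_def KX_def KY_def ..

lemma Q_prob: "prob_space Q"
  unfolding Q_eq by (rule prob_space_bind'[OF PZ_prob Qemb_meas])

lemma sets_Q[simp]: "sets Q = sets S"
  unfolding Q_eq by (rule sets_bind'[OF PZ_prob Qemb_meas])

lemma P_int:
  assumes h[measurable]: "h \<in> borel_measurable S"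
  shows "(\<integral>\<^sup>+ w. h w \<partial>P) = (\<integral>\<^sup>+ z. \<integral>\<^sup>+ xy. h (xy, z) \<partial>K z \<partial>PZ)"
proof -
  have "(\<integral>\<^sup>+ w. h w \<partial>P) = (\<integral>\<^sup>+ z. \<integral>\<^sup>+ w. h w \<partial>Kemb z \<partial>PZ)"
    unfolding P_eq by (rule nn_integral_bind[OF h Kemb_sub])
  also have "\<dots> = (\<integral>\<^sup>+ z. \<integral>\<^sup>+ xy. h (xy, z) \<partial>K z \<partial>PZ)"
  proof (rule nn_integral_cong)
    fix z assume z: "z \<in> space PZ"
    then have sK: "sets (K z) = sets (MX \<Otimes>\<^sub>M MY)" using K_space by simp
    show "(\<integral>\<^sup>+ w. h w \<partial>Kemb z) = (\<integral>\<^sup>+ xy. h (xy, z) \<partial>K z)"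
      unfolding Kemb_def using z
      by (subst nn_integral_distr) (auto simp: measurable_cong_sets[OF sK refl])
  qed
  finally show ?thesis .
qed

lemma Q_int:
  assumes h[measurable]: "h \<in> borel_measurable S"
  shows "(\<integral>\<^sup>+ w. h w \<partial>Q) = (\<integral>\<^sup>+ z. \<integral>\<^sup>+ xy. h (xy, z) \<partial>(KX z \<Otimes>\<^sub>M KY z) \<partial>PZ)"
proof -
  have "(\<integral>\<^sup>+ w. h w \<partial>Q) = (\<integral>\<^sup>+ z. \<integral>\<^sup>+ w. h w \<partial>Qemb z \<partial>PZ)"
    unfolding Q_eq by (rule nn_integral_bind[OF h Qemb_sub])
  also have "\<dots> = (\<integral>\<^sup>+ z. \<integral>\<^sup>+ xy. h (xy, z) \<partial>(KX z \<Otimes>\<^sub>M KY z) \<partial>PZ)"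
  proof (rule nn_integral_cong)
    fix z assume z: "z \<in> space PZ"
    then have sK: "sets (KX z \<Otimes>\<^sub>M KY z) = sets (MX \<Otimes>\<^sub>M MY)"
      using KX_space KY_space by (intro sets_pair_measure_cong) auto
    show "(\<integral>\<^sup>+ w. h w \<partial>Qemb z) = (\<integral>\<^sup>+ xy. h (xy, z) \<partial>(KX z \<Otimes>\<^sub>M KY z))"
      unfolding Qemb_def using z
      by (subst nn_integral_distr) (auto simp: measurable_cong_sets[OF sK refl])
  qed
  finally show ?thesis .
qed

lemma inner_meas:
  assumes h[measurable]: "h \<in> borel_measurable S"
  shows "(\<lambda>z. \<integral>\<^sup>+ xy. h (xy, z) \<partial>K z) \<in> borel_measurable MZ"
  by (rule nn_integral_measurable_subprob_algebra2[OF _ K_sub]) measurable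

lemma graph_sets: "{w \<in> space S. fst (fst w) = T (snd (fst w), snd w)} \<in> sets S"
  by (rule pred_eq_std[OF stdX]) measurable

lemma AE_graph: "AE z in PZ. AE xy in K z. fst xy = T (snd xy, z)"
proof -
  define G where "G = {w \<in> space S. fst (fst w) = T (snd (fst w), snd w)}"
  have G[measurable]: "G \<in> sets S" unfolding G_def by (rule graph_sets)
  let ?h = "indicator (space S - G) :: _ \<Rightarrow> ennreal"
  have hm[measurable]: "?h \<in> borel_measurable S" by measurable
  have "(\<integral>\<^sup>+ w. ?h w \<partial>P) = emeasure P (space S - G)"
    by (simp add: nn_integral_indicator)
  also have "\<dots> = emeasure M ((\<lambda>\<omega>. ((X \<omega>, Y \<omega>), Z \<omega>)) -` (space S - G) \<inter> space M)"
    unfolding P_def by (rule emeasure_distr) auto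
  also have "(\<lambda>\<omega>. ((X \<omega>, Y \<omega>), Z \<omega>)) -` (space S - G) \<inter> space M = {}"
    using X_def by (auto simp: G_def)
  finally have "(\<integral>\<^sup>+ z. \<integral>\<^sup>+ xy. ?h (xy, z) \<partial>K z \<partial>PZ) = 0"
    using P_int[OF hm] by simp
  then have "AE z in PZ. (\<integral>\<^sup>+ xy. ?h (xy, z) \<partial>K z) = 0"
    using inner_meas[OF hm] unfolding PZ_cong[symmetric] by (subst (asm) nn_integral_0_iff_AE) auto
  moreover have "AE z in PZ. z \<in> space PZ" by (rule AE_space)
  ultimately show ?thesis
  proof eventually_elim
    fix z assume h0: "(\<integral>\<^sup>+ xy. ?h (xy, z) \<partial>K z) = 0" and z0: "z \<in> space PZ"
    then have sK: "sets (K z) = sets (MX \<Otimes>\<^sub>M MY)" using K_space by simp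
    then have spK: "space (K z) = space (MX \<Otimes>\<^sub>M MY)" by (rule sets_eq_imp_space_eq)
    have "(\<lambda>xy. ?h (xy, z)) \<in> borel_measurable (K z)"
      using z0 by (simp add: measurable_cong_sets[OF sK refl])
    with h0 have "AE xy in K z. ?h (xy, z) = 0" by (simp add: nn_integral_0_iff_AE)
    moreover have "AE xy in K z. xy \<in> space (K z)" by (rule AE_space)
    ultimately show "AE xy in K z. fst xy = T (snd xy, z)"
      by eventually_elim (use z0 spK in \<open>auto simp: G_def space_pair_measure indicator_def split: if_splits\<close>)
  qed
qed

end

context tsetup begin

definition "A0 = {z\<in>space MZ. \<exists>x\<in>space MX. a z x = 1}"
definition "Acont = {z\<in>space MZ. \<exists>B\<in>sets MX. emeasure (KX z) B > 0 \<and> (\<forall>x\<in>B. a z x = 0)}"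
definition "Aatomic = {z\<in>space MZ. \<not> (\<exists>x\<in>space MX. a z x = 1) \<and>
           (\<exists>B\<in>sets MX. countable B \<and> \<not> (\<exists>x. B = {x}) \<and> emeasure (KX z) B = 1)}"

lemma a_sec[measurable]: "z \<in> space MZ \<Longrightarrow> (\<lambda>x. a z x) \<in> borel_measurable MX"
  using measurable_Pair2[OF a_meas, of z] by simp

lemma a_le1: "z \<in> space MZ \<Longrightarrow> a z x \<le> 1"
  unfolding a_def using KX_space prob_space.emeasure_le_1 by blast

lemma a_fin: "z \<in> space MZ \<Longrightarrow> a z x \<noteq> \<infinity>"
  using a_le1[of z x] by (auto simp: top_unique)

lemma space_KX: "z \<in> space MZ \<Longrightarrow> space (KX z) = space MX"
  unfolding KX_def by simp

lemma sets_KX: "z \<in> space MZ \<Longrightarrow> sets (KX z) = sets MX"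
  unfolding KX_def by simp

lemma lvl_sets: "z \<in> space MZ \<Longrightarrow> {x \<in> space MX. a z x = c} \<in> sets MX"
  by measurable

lemma lvl_meas: "(\<lambda>z. emeasure (KX z) {x \<in> space MX. a z x = c}) \<in> borel_measurable MZ"
proof (rule emeasure_measurable_subprob_algebra2)
  have "{w \<in> space (MZ \<Otimes>\<^sub>M MX). (case w of (z, x) \<Rightarrow> a z x) = c} \<in> sets (MZ \<Otimes>\<^sub>M MX)"
    by measurable
  moreover have "{w \<in> space (MZ \<Otimes>\<^sub>M MX). (case w of (z, x) \<Rightarrow> a z x) = c} =
    (SIGMA z:space MZ. {x \<in> space MX. a z x = c})"
    by (auto simp: space_pair_measure)
  ultimately show "(SIGMA z:space MZ. {x \<in> space MX. a z x = c}) \<in> sets (MZ \<Otimes>\<^sub>M MX)" by simp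
  show "KX \<in> MZ \<rightarrow>\<^sub>M subprob_algebra MX" by (rule measurable_prob_algebraD[OF KX_meas])
qed

lemma Acont_iff: "z \<in> space MZ \<Longrightarrow> z \<in> Acont \<longleftrightarrow> 0 < emeasure (KX z) {x \<in> space MX. a z x = 0}"
proof
  assume z: "z \<in> space MZ" and "z \<in> Acont"
  then obtain B where B: "B \<in> sets MX" "emeasure (KX z) B > 0" "\<forall>x\<in>B. a z x = 0"
    unfolding Acont_def by blast
  have "B \<subseteq> {x \<in> space MX. a z x = 0}" using B sets.sets_into_space by blast
  then have "emeasure (KX z) B \<le> emeasure (KX z) {x \<in> space MX. a z x = 0}"
    by (rule emeasure_mono) (use z lvl_sets sets_KX in auto)
  with B show "0 < emeasure (KX z) {x \<in> space MX. a z x = 0}" by simp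
next
  assume z: "z \<in> space MZ" and "0 < emeasure (KX z) {x \<in> space MX. a z x = 0}"
  then show "z \<in> Acont" unfolding Acont_def using lvl_sets[OF z] by blast
qed

lemma A0_iff: "z \<in> space MZ \<Longrightarrow> z \<in> A0 \<longleftrightarrow> 0 < emeasure (KX z) {x \<in> space MX. a z x = 1}"
proof
  assume z: "z \<in> space MZ" and "z \<in> A0"
  then obtain x where x: "x \<in> space MX" "a z x = 1" unfolding A0_def by blast
  have "{x} \<subseteq> {x \<in> space MX. a z x = 1}" using x by auto
  then have "emeasure (KX z) {x} \<le> emeasure (KX z) {x \<in> space MX. a z x = 1}"
    by (rule emeasure_mono) (use z lvl_sets sets_KX in auto)
  then have "1 \<le> emeasure (KX z) {x \<in> space MX. a z x = 1}" using x by (simp add: a_def)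
  then show "0 < emeasure (KX z) {x \<in> space MX. a z x = 1}" by (rule less_le_trans[OF zero_less_one])
next
  assume z: "z \<in> space MZ" and pos: "0 < emeasure (KX z) {x \<in> space MX. a z x = 1}"
  then have "{x \<in> space MX. a z x = 1} \<noteq> {}" by (metis emeasure_empty less_irrefl)
  then show "z \<in> A0" unfolding A0_def using z by blast
qed

lemma A0_sets: "A0 \<in> sets MZ"
proof -
  have "A0 = {z \<in> space MZ. 0 < emeasure (KX z) {x \<in> space MX. a z x = 1}}"
    using A0_iff by (auto simp: A0_def)
  also have "\<dots> \<in> sets MZ" using lvl_meas[of 1] by measurable
  finally show ?thesis .
qed

lemma Acont_sets: "Acont \<in> sets MZ"
proof -
  have "Acont = {z \<in> space MZ. 0 < emeasure (KX z) {x \<in> space MX. a z x = 0}}"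
    using Acont_iff by (auto simp: Acont_def)
  also have "\<dots> \<in> sets MZ" using lvl_meas[of 0] by measurable
  finally show ?thesis .
qed

lemma atomic_not_cont:
  assumes z: "z \<in> space MZ" and B: "B \<in> sets MX" "countable B" "emeasure (KX z) B = 1"
  shows "emeasure (KX z) {x \<in> space MX. a z x = 0} = 0"
proof -
  interpret KXp: prob_space "KX z" using KX_space[OF z] by simp
  let ?C = "{x \<in> space MX. a z x = 0}"
  have Cs: "?C \<in> sets (KX z)" using lvl_sets[OF z] sets_KX[OF z] by simp
  have Bs: "B \<in> sets (KX z)" using B sets_KX[OF z] by simp
  have "(\<Union>x\<in>?C \<inter> B. {x}) \<in> null_sets (KX z)"
  proof (rule null_sets_UN')
    show "countable (?C \<inter> B)" using B by auto
    fix x assume "x \<in> ?C \<inter> B"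
    then show "{x} \<in> null_sets (KX z)" using sing_sets sets_KX[OF z] by (auto simp: a_def)
  qed
  then have n1: "emeasure (KX z) (?C \<inter> B) = 0" by auto
  have "emeasure (KX z) (space (KX z) - B) = emeasure (KX z) (space (KX z)) - emeasure (KX z) B"
    by (rule emeasure_compl[OF Bs]) simp
  then have n2: "emeasure (KX z) (space (KX z) - B) = 0" using B by (simp add: KXp.emeasure_space_1)
  have sub: "?C \<subseteq> (?C \<inter> B) \<union> (space (KX z) - B)" using space_KX[OF z] by auto
  have un: "(?C \<inter> B) \<union> (space (KX z) - B) \<in> sets (KX z)" using Cs Bs by auto
  have "emeasure (KX z) ?C \<le> emeasure (KX z) ((?C \<inter> B) \<union> (space (KX z) - B))"
    by (rule emeasure_mono[OF sub un])
  also have "\<dots> \<le> emeasure (KX z) (?C \<inter> B) + emeasure (KX z) (space (KX z) - B)"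
    by (rule emeasure_subadditive) (use Cs Bs in auto)
  finally show ?thesis using n1 n2 by simp
qed

lemma trichotomy:
  assumes z: "z \<in> space MZ" and n0: "z \<notin> A0" and nc: "z \<notin> Acont"
  shows "z \<in> Aatomic"
proof -
  interpret KXp: prob_space "KX z" using KX_space[OF z] by simp
  let ?C = "{x \<in> space MX. a z x = 0}"
  let ?B = "{x \<in> space MX. a z x \<noteq> 0}"
  have C0: "emeasure (KX z) ?C = 0" using nc Acont_iff[OF z] by simp
  have Cs: "?C \<in> sets (KX z)" using lvl_sets[OF z] sets_KX[OF z] by simp
  have BC: "?B = space (KX z) - ?C" using space_KX[OF z] by auto
  have "space (KX z) - ?C \<in> sets (KX z)" using Cs by auto
  then have "?B \<in> sets (KX z)" using BC by simp
  then have Bs: "?B \<in> sets MX" using sets_KX[OF z] by simp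
  have "emeasure (KX z) ?B = 1"
    unfolding BC by (subst emeasure_compl[OF Cs]) (auto simp: C0 KXp.emeasure_space_1)
  moreover have "countable ?B"
  proof (rule countable_subset[OF _ KXp.countable_support])
    show "?B \<subseteq> {x. measure (KX z) {x} \<noteq> 0}"
      using a_fin[OF z] by (auto simp: a_def measure_def enn2real_eq_0_iff)
  qed
  moreover have "\<not> (\<exists>x. ?B = {x})"
  proof
    assume "\<exists>x. ?B = {x}"
    then obtain x where x: "?B = {x}" by blast
    then have "x \<in> space MX" by blast
    moreover have "a z x = 1" using \<open>emeasure (KX z) ?B = 1\<close> x by (simp add: a_def)
    ultimately show False using n0 z by (auto simp: A0_def)
  qed
  ultimately show ?thesis using n0 z Bs unfolding Aatomic_def A0_def by blast
qed

lemma Aatomic_eq: "Aatomic = space MZ - A0 - Acont"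
proof (intro equalityI subsetI)
  fix z assume z: "z \<in> Aatomic"
  then have zs: "z \<in> space MZ" "z \<notin> A0" by (auto simp: Aatomic_def A0_def)
  from z obtain B where "B \<in> sets MX" "countable B" "emeasure (KX z) B = 1" by (auto simp: Aatomic_def)
  then have "z \<notin> Acont" using atomic_not_cont[OF zs(1)] Acont_iff[OF zs(1)] by simp
  with zs show "z \<in> space MZ - A0 - Acont" by simp
next
  fix z assume "z \<in> space MZ - A0 - Acont" then show "z \<in> Aatomic" using trichotomy by blast
qed

lemma Aatomic_sets: "Aatomic \<in> sets MZ"
  unfolding Aatomic_eq using A0_sets Acont_sets by auto

end


lemma inv_mult_self: "(c::ennreal) \<noteq> 0 \<Longrightarrow> c \<noteq> top \<Longrightarrow> inverse c * c = 1"
proof (cases c rule: ennreal_cases)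
  case (real r)
  assume "c \<noteq> 0" "c \<noteq> top"
  with real have r: "0 < r" by auto
  have "inverse c * c = ennreal (inverse r) * ennreal r" using real r by (simp add: inverse_ennreal)
  also have "\<dots> = ennreal (inverse r * r)" using r by (subst ennreal_mult[symmetric]) auto
  also have "\<dots> = 1" using r by simp
  finally show ?thesis .
qed auto

lemma KL_dens:
  assumes Nq: "prob_space Nq" and sN: "sets Np = sets Nq" and eq: "density Nq g = Np"
    and g: "g \<in> borel_measurable Nq"
    and ae: "AE w in Np. g w = inverse (c w) \<and> 0 < c w \<and> c w \<le> 1"
  shows "KL Np Nq = enn2ereal (\<integral>\<^sup>+ w. ennreal (- ln (enn2real (c w))) \<partial>Np)"
proof -
  interpret Q: prob_space Nq by (rule Nq)
  have ac: "absolutely_continuous Nq Np"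
    using absolutely_continuousI_density[OF g] eq by simp
  have "AE w in Nq. g w = RN_deriv Nq Np w"
    by (rule Q.RN_deriv_unique[OF g eq])
  then have rn: "AE w in Np. g w = RN_deriv Nq Np w"
    by (rule absolutely_continuous_AE[OF sN ac])
  have key: "AE w in Np. max 0 (ln (enn2real (RN_deriv Nq Np w))) = - ln (enn2real (c w))
       \<and> max 0 (- ln (enn2real (RN_deriv Nq Np w))) = 0"
    using rn ae
  proof eventually_elim
    fix w assume "g w = RN_deriv Nq Np w" and c: "g w = inverse (c w) \<and> 0 < c w \<and> c w \<le> 1"
    then have R: "RN_deriv Nq Np w = inverse (c w)" by simp
    from c obtain r where r: "c w = ennreal r" "0 < r" "r \<le> 1"
      by (cases "c w" rule: ennreal_cases) (auto simp: top_unique)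
    have "enn2real (RN_deriv Nq Np w) = inverse r"
      unfolding R r using r by (simp add: inverse_ennreal)
    moreover have "enn2real (c w) = r" using r by simp
    moreover have "ln r \<le> 0" using r by simp
    ultimately show "max 0 (ln (enn2real (RN_deriv Nq Np w))) = - ln (enn2real (c w))
       \<and> max 0 (- ln (enn2real (RN_deriv Nq Np w))) = 0"
      by (simp add: ln_inverse)
  qed
  have i1: "(\<integral>\<^sup>+ x. ennreal (max 0 (ln (enn2real (RN_deriv Nq Np x)))) \<partial>Np)
      = (\<integral>\<^sup>+ w. ennreal (- ln (enn2real (c w))) \<partial>Np)"
    by (rule nn_integral_cong_AE) (use key in \<open>eventually_elim, simp\<close>)
  have i2: "(\<integral>\<^sup>+ x. ennreal (max 0 (- ln (enn2real (RN_deriv Nq Np x)))) \<partial>Np) = 0"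
  proof -
    have "(\<integral>\<^sup>+ x. ennreal (max 0 (- ln (enn2real (RN_deriv Nq Np x)))) \<partial>Np) = (\<integral>\<^sup>+ x. 0 \<partial>Np)"
      by (rule nn_integral_cong_AE) (use key in \<open>eventually_elim, simp\<close>)
    then show ?thesis by simp
  qed
  show ?thesis
    unfolding KL_def using sN ac i1 i2 by (simp add: zero_ennreal.rep_eq)
qed

context tsetup begin

lemma pair_sf: "z \<in> space MZ \<Longrightarrow> pair_sigma_finite (KX z) (KY z)"
  by (intro pair_sigma_finite.intro prob_space_imp_sigma_finite) (use KX_space KY_space in auto)

lemma sets_KXKY: "z \<in> space MZ \<Longrightarrow> sets (KX z \<Otimes>\<^sub>M KY z) = sets (MX \<Otimes>\<^sub>M MY)"
  using KX_space KY_space by (intro sets_pair_measure_cong) auto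

lemma space_KXKY: "z \<in> space MZ \<Longrightarrow> space (KX z \<Otimes>\<^sub>M KY z) = space (MX \<Otimes>\<^sub>M MY)"
  using sets_KXKY by (rule sets_eq_imp_space_eq)

lemma T_sec[measurable]: "z \<in> space MZ \<Longrightarrow> (\<lambda>y. T (y, z)) \<in> MY \<rightarrow>\<^sub>M MX"
  by measurable

lemma graph_pred[measurable]: "z \<in> space MZ \<Longrightarrow> Measurable.pred (MX \<Otimes>\<^sub>M MY) (\<lambda>xy. fst xy = T (snd xy, z))"
  by (rule pred_eqX) measurable

lemma prod_null:
  assumes z: "z \<in> space MZ"
  shows "emeasure (KX z \<Otimes>\<^sub>M KY z) {xy \<in> space (MX \<Otimes>\<^sub>M MY). fst xy = T (snd xy, z) \<and> a z (fst xy) = 0} = 0"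
proof -
  interpret pair_sigma_finite "KX z" "KY z" by (rule pair_sf[OF z])
  let ?N = "{xy \<in> space (MX \<Otimes>\<^sub>M MY). fst xy = T (snd xy, z) \<and> a z (fst xy) = 0}"
  have Ns: "?N \<in> sets (MX \<Otimes>\<^sub>M MY)" using z by measurable
  have "emeasure (KX z \<Otimes>\<^sub>M KY z) ?N = (\<integral>\<^sup>+ y. emeasure (KX z) ((\<lambda>x. (x, y)) -` ?N) \<partial>KY z)"
    by (rule emeasure_pair_measure_alt2) (use Ns sets_KXKY[OF z] in simp)
  also have "\<dots> = (\<integral>\<^sup>+ y. 0 \<partial>KY z)"
  proof (rule nn_integral_cong)
    fix y assume y: "y \<in> space (KY z)"
    then have ys: "y \<in> space MY" unfolding KY_def by simp
    have Ts: "T (y, z) \<in> space MX" using measurable_space[OF T_meas] ys z by (auto simp: space_pair_measure)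
    have "(\<lambda>x. (x, y)) -` ?N = (if a z (T (y, z)) = 0 then {T (y, z)} else {})"
      using ys Ts by (auto simp: space_pair_measure)
    then show "emeasure (KX z) ((\<lambda>x. (x, y)) -` ?N) = 0" by (simp add: a_def)
  qed
  finally show ?thesis by simp
qed

definition "g z xy = (if fst xy = T (snd xy, z) \<and> a z (fst xy) \<noteq> 0 then inverse (a z (fst xy)) else 0)"

lemma g_meas[measurable]: "z \<in> space MZ \<Longrightarrow> g z \<in> borel_measurable (MX \<Otimes>\<^sub>M MY)"
  unfolding g_def by measurable

lemma dens:
  assumes z: "z \<in> space MZ" and gr: "AE xy in K z. fst xy = T (snd xy, z)"
    and nc: "emeasure (KX z) {x \<in> space MX. a z x = 0} = 0"
  shows "density (KX z \<Otimes>\<^sub>M KY z) (g z) = K z"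
proof (rule measure_eqI)
  interpret pair_sigma_finite "KX z" "KY z" by (rule pair_sf[OF z])
  have sK: "sets (K z) = sets (MX \<Otimes>\<^sub>M MY)" using K_space[OF z] by simp
  show "sets (density (KX z \<Otimes>\<^sub>M KY z) (g z)) = sets (K z)"
    using sK sets_KXKY[OF z] by simp
  fix A assume "A \<in> sets (density (KX z \<Otimes>\<^sub>M KY z) (g z))"
  then have A: "A \<in> sets (MX \<Otimes>\<^sub>M MY)" using sets_KXKY[OF z] by simp
  have gm: "g z \<in> borel_measurable (KX z \<Otimes>\<^sub>M KY z)"
    using g_meas[OF z] by (simp add: measurable_cong_sets[OF sets_KXKY[OF z] refl])
  have "emeasure (density (KX z \<Otimes>\<^sub>M KY z) (g z)) A = (\<integral>\<^sup>+ xy. g z xy * indicator A xy \<partial>(KX z \<Otimes>\<^sub>M KY z))"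
    using A sets_KXKY[OF z] gm by (simp add: emeasure_density)
  also have "\<dots> = (\<integral>\<^sup>+ y. \<integral>\<^sup>+ x. g z (x, y) * indicator A (x, y) \<partial>KX z \<partial>KY z)"
    by (rule nn_integral_snd[symmetric]) (use A gm sets_KXKY[OF z] in \<open>simp add: measurable_cong_sets[OF sets_KXKY[OF z] refl]\<close>)
  also have "\<dots> = (\<integral>\<^sup>+ y. (if a z (T (y, z)) \<noteq> 0 then indicator A (T (y, z), y) else 0) \<partial>KY z)"
  proof (rule nn_integral_cong)
    fix y assume y: "y \<in> space (KY z)"
    then have ys: "y \<in> space MY" unfolding KY_def by simp
    let ?x0 = "T (y, z)"
    have Ts: "?x0 \<in> space MX" using measurable_space[OF T_meas] ys z by (auto simp: space_pair_measure)
    let ?c = "if a z ?x0 \<noteq> 0 then inverse (a z ?x0) * indicator A (?x0, y) else 0"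
    have "(\<integral>\<^sup>+ x. g z (x, y) * indicator A (x, y) \<partial>KX z) = (\<integral>\<^sup>+ x. ?c * indicator {?x0} x \<partial>KX z)"
      by (rule nn_integral_cong) (auto simp: g_def indicator_def)
    also have "\<dots> = ?c * a z ?x0"
      using sing_sets[OF Ts] sets_KX[OF z] by (simp add: nn_integral_cmult_indicator a_def)
    also have "\<dots> = (if a z (T (y, z)) \<noteq> 0 then indicator A (T (y, z), y) else 0)"
      using inv_mult_self[of "a z ?x0"] a_fin[OF z] by (auto simp: mult.commute mult.left_commute)
    finally show "(\<integral>\<^sup>+ x. g z (x, y) * indicator A (x, y) \<partial>KX z) = (if a z (T (y, z)) \<noteq> 0 then indicator A (T (y, z), y) else 0)" .
  qed
  also have "\<dots> = (\<integral>\<^sup>+ xy. (if a z (T (snd xy, z)) \<noteq> 0 then indicator A (T (snd xy, z), snd xy) else 0) \<partial>K z)"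
    unfolding KY_def using z A
    by (subst nn_integral_distr) (auto simp: measurable_cong_sets[OF sK refl])
  also have "\<dots> = (\<integral>\<^sup>+ xy. indicator A xy \<partial>K z)"
  proof (rule nn_integral_cong_AE)
    have "AE x in KX z. a z x \<noteq> 0"
      using nc lvl_sets[OF z, of 0] sets_KX[OF z] space_KX[OF z]
      by (subst AE_iff_measurable[where N="{x \<in> space MX. a z x = 0}"]) auto
    then have "AE xy in K z. a z (fst xy) \<noteq> 0"
      unfolding KX_def using z
      by (subst (asm) AE_distr_iff) (auto simp: measurable_cong_sets[OF sK refl])
    with gr show "AE xy in K z. (if a z (T (snd xy, z)) \<noteq> 0 then indicator A (T (snd xy, z), snd xy) else 0) = indicator A xy"
      by eventually_elim (metis prod.collapse)
  qed
  also have "\<dots> = emeasure (K z) A" using A sK by simp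
  finally show "emeasure (density (KX z \<Otimes>\<^sub>M KY z) (g z)) A = emeasure (K z) A" .
qed

end

context tsetup begin

definition "F z = (\<integral>\<^sup>+ xy. ennreal (- ln (enn2real (a z (fst xy)))) \<partial>K z)"

lemma AE_a_pos:
  assumes z: "z \<in> space MZ" and nc: "emeasure (KX z) {x \<in> space MX. a z x = 0} = 0"
  shows "AE xy in K z. a z (fst xy) \<noteq> 0"
proof -
  have sK: "sets (K z) = sets (MX \<Otimes>\<^sub>M MY)" using K_space[OF z] by simp
  have "AE x in KX z. a z x \<noteq> 0"
    using nc lvl_sets[OF z, of 0] sets_KX[OF z] space_KX[OF z]
    by (subst AE_iff_measurable[where N="{x \<in> space MX. a z x = 0}"]) auto
  then show "AE xy in K z. a z (fst xy) \<noteq> 0"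
    unfolding KX_def using z
    by (subst (asm) AE_distr_iff) (auto simp: measurable_cong_sets[OF sK refl])
qed

lemma MI_good:
  assumes z: "z \<in> space MZ" and gr: "AE xy in K z. fst xy = T (snd xy, z)"
    and nc: "emeasure (KX z) {x \<in> space MX. a z x = 0} = 0"
  shows "MI MX MY (K z) = enn2ereal (F z)"
proof -
  have "MI MX MY (K z) = KL (K z) (KX z \<Otimes>\<^sub>M KY z)"
    unfolding MI_def KX_def KY_def ..
  also have "\<dots> = enn2ereal (F z)"
    unfolding F_def
  proof (rule KL_dens)
    show "prob_space (KX z \<Otimes>\<^sub>M KY z)" using KX_space[OF z] KY_space[OF z] by (intro prob_space_pair) auto
    show "sets (K z) = sets (KX z \<Otimes>\<^sub>M KY z)" using K_space[OF z] sets_KXKY[OF z] by simp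
    show "density (KX z \<Otimes>\<^sub>M KY z) (g z) = K z" by (rule dens[OF z gr nc])
    show "g z \<in> borel_measurable (KX z \<Otimes>\<^sub>M KY z)"
      using g_meas[OF z] by (simp add: measurable_cong_sets[OF sets_KXKY[OF z] refl])
    show "AE w in K z. g z w = inverse (a z (fst w)) \<and> 0 < a z (fst w) \<and> a z (fst w) \<le> 1"
      using gr AE_a_pos[OF z nc]
      by eventually_elim (auto simp: g_def a_le1[OF z] zero_less_iff_neq_zero)
  qed
  finally show ?thesis .
qed

lemma F_A0:
  assumes z: "z \<in> space MZ" and z0: "z \<in> A0"
  shows "F z = 0"
proof -
  interpret KXp: prob_space "KX z" using KX_space[OF z] by simp
  have sK: "sets (K z) = sets (MX \<Otimes>\<^sub>M MY)" using K_space[OF z] by simp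
  from z0 obtain x0 where x0: "x0 \<in> space MX" "a z x0 = 1" unfolding A0_def by blast
  have s0: "{x0} \<in> sets (KX z)" using sing_sets[OF x0(1)] sets_KX[OF z] by simp
  have "emeasure (KX z) (space (KX z) - {x0}) = emeasure (KX z) (space (KX z)) - emeasure (KX z) {x0}"
    by (rule emeasure_compl[OF s0]) simp
  then have "emeasure (KX z) (space (KX z) - {x0}) = 0"
    using x0 by (simp add: KXp.emeasure_space_1 a_def)
  then have "AE x in KX z. x = x0"
    using s0 by (subst AE_iff_measurable[where N="space (KX z) - {x0}"]) auto
  have eqs: "{x. x = x0 \<and> x \<in> space MX} = {x0}" using x0 by auto
  have "AE xy in K z. fst xy = x0"
    using \<open>AE x in KX z. x = x0\<close> unfolding KX_def using z x0
    by (subst (asm) AE_distr_iff) (auto simp: measurable_cong_sets[OF sK refl] sing_sets eqs)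
  have "F z = (\<integral>\<^sup>+ xy. 0 \<partial>K z)"
    unfolding F_def by (rule nn_integral_cong_AE) (use \<open>AE xy in K z. fst xy = x0\<close> in \<open>eventually_elim, simp add: x0(2)\<close>)
  then show ?thesis by simp
qed

lemma A0_not_cont: "z \<in> A0 \<Longrightarrow> z \<notin> Acont"
proof -
  assume z0: "z \<in> A0"
  then have z: "z \<in> space MZ" by (simp add: A0_def)
  from z0 obtain x0 where x0: "x0 \<in> space MX" "a z x0 = 1" unfolding A0_def by blast
  have "emeasure (KX z) {x \<in> space MX. a z x = 0} = 0"
    by (rule atomic_not_cont[OF z sing_sets[OF x0(1)]]) (use x0 in \<open>auto simp: a_def\<close>)
  then show ?thesis using Acont_iff[OF z] by simp
qed

lemma AE_P:
  assumes R: "{w \<in> space S. R w} \<in> sets S"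
    and ae: "AE z in PZ. AE xy in K z. R (xy, z)"
  shows "AE w in P. R w"
proof -
  let ?N = "{w \<in> space S. \<not> R w}"
  have "?N = space S - {w \<in> space S. R w}" by auto
  then have Ns: "?N \<in> sets S" using R by auto
  have hm: "indicator ?N \<in> borel_measurable S" using Ns by simp
  have "emeasure P ?N = (\<integral>\<^sup>+ w. indicator ?N w \<partial>P)" using Ns by simp
  also have "\<dots> = (\<integral>\<^sup>+ z. \<integral>\<^sup>+ xy. indicator ?N (xy, z) \<partial>K z \<partial>PZ)" by (rule P_int[OF hm])
  also have "\<dots> = (\<integral>\<^sup>+ z. 0 \<partial>PZ)"
  proof (rule nn_integral_cong_AE)
    show "AE z in PZ. (\<integral>\<^sup>+ xy. indicator ?N (xy, z) \<partial>K z) = 0"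
      using ae AE_space
    proof eventually_elim
      fix z assume ae': "AE xy in K z. R (xy, z)" and z: "z \<in> space PZ"
      show "(\<integral>\<^sup>+ xy. indicator ?N (xy, z) \<partial>K z) = 0"
        by (subst nn_integral_0_iff_AE) (use z ae' K_space Ns in \<open>auto simp: measurable_cong_sets[OF conjunct2[OF K_space] refl] elim!: eventually_mono\<close>)
    qed
  qed
  finally have "emeasure P ?N = 0" by simp
  moreover have "space P = space S" using sets_P by (rule sets_eq_imp_space_eq)
  ultimately show ?thesis using Ns by (subst AE_iff_measurable[where N="?N"]) auto
qed

end

context tsetup begin

lemma Acont_eq: "{z \<in> space PZ. \<not> z \<notin> Acont} = Acont"
proof -
  have "Acont \<subseteq> space MZ" unfolding Acont_def by blast
  then show ?thesis by auto
qed

lemma space_P: "space P = space S" using sets_P by (rule sets_eq_imp_space_eq)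

lemma graphS_pred[measurable]: "Measurable.pred S (\<lambda>w. fst (fst w) = T (snd (fst w), snd w))"
  by (rule pred_eqX) measurable

definition "G w = g (snd w) (fst w)"

lemma G_meas[measurable]: "G \<in> borel_measurable S"
  unfolding G_def g_def by measurable

lemma finite_case:
  assumes A: "emeasure PZ Acont = 0"
  shows "KL P Q = enn2ereal (\<integral>\<^sup>+ z. e2ennreal (MI MX MY (K z)) * indicator Aatomic z \<partial>PZ)"
proof -
  have ncAE: "AE z in PZ. z \<notin> Acont"
    using A Acont_sets by (subst AE_iff_measurable[OF _ Acont_eq]) auto
  have good: "AE z in PZ. z \<in> space MZ \<and> (AE xy in K z. fst xy = T (snd xy, z)) \<and>
      emeasure (KX z) {x \<in> space MX. a z x = 0} = 0"
    using AE_graph ncAE AE_space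
  proof eventually_elim
    fix z assume "AE xy in K z. fst xy = T (snd xy, z)" "z \<notin> Acont" "z \<in> space PZ"
    then show "z \<in> space MZ \<and> (AE xy in K z. fst xy = T (snd xy, z)) \<and>
      emeasure (KX z) {x \<in> space MX. a z x = 0} = 0"
      using Acont_iff[of z] by simp
  qed
  have GQ: "G \<in> borel_measurable Q" by (simp add: measurable_cong_sets[OF sets_Q refl])
  have dP: "density Q G = P"
  proof (rule measure_eqI)
    show "sets (density Q G) = sets P" by simp
    fix E assume "E \<in> sets (density Q G)"
    then have E[measurable]: "E \<in> sets S" by simp
    have "emeasure (density Q G) E = (\<integral>\<^sup>+ w. G w * indicator E w \<partial>Q)"
      using GQ E by (simp add: emeasure_density)
    also have "\<dots> = (\<integral>\<^sup>+ z. \<integral>\<^sup>+ xy. G (xy, z) * indicator E (xy, z) \<partial>(KX z \<Otimes>\<^sub>M KY z) \<partial>PZ)"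
      by (rule Q_int) measurable
    also have "\<dots> = (\<integral>\<^sup>+ z. \<integral>\<^sup>+ xy. indicator E (xy, z) \<partial>K z \<partial>PZ)"
    proof (rule nn_integral_cong_AE)
      show "AE z in PZ. (\<integral>\<^sup>+ xy. G (xy, z) * indicator E (xy, z) \<partial>(KX z \<Otimes>\<^sub>M KY z)) = (\<integral>\<^sup>+ xy. indicator E (xy, z) \<partial>K z)"
        using good
      proof eventually_elim
        fix z assume gz: "z \<in> space MZ \<and> (AE xy in K z. fst xy = T (snd xy, z)) \<and>
          emeasure (KX z) {x \<in> space MX. a z x = 0} = 0"
        then have z: "z \<in> space MZ" by simp
        have gm: "g z \<in> borel_measurable (KX z \<Otimes>\<^sub>M KY z)"
          using g_meas[OF z] by (simp add: measurable_cong_sets[OF sets_KXKY[OF z] refl])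
        have im: "(\<lambda>xy. indicator E (xy, z)) \<in> borel_measurable (KX z \<Otimes>\<^sub>M KY z)"
          using z by (simp add: measurable_cong_sets[OF sets_KXKY[OF z] refl])
        have "(\<integral>\<^sup>+ xy. G (xy, z) * indicator E (xy, z) \<partial>(KX z \<Otimes>\<^sub>M KY z))
            = (\<integral>\<^sup>+ xy. g z xy * indicator E (xy, z) \<partial>(KX z \<Otimes>\<^sub>M KY z))"
          by (simp add: G_def)
        also have "\<dots> = (\<integral>\<^sup>+ xy. indicator E (xy, z) \<partial>density (KX z \<Otimes>\<^sub>M KY z) (g z))"
          by (rule nn_integral_density[symmetric, OF gm im])
        also have "\<dots> = (\<integral>\<^sup>+ xy. indicator E (xy, z) \<partial>K z)"
          using dens[of z] gz by simp
        finally show "(\<integral>\<^sup>+ xy. G (xy, z) * indicator E (xy, z) \<partial>(KX z \<Otimes>\<^sub>M KY z)) = (\<integral>\<^sup>+ xy. indicator E (xy, z) \<partial>K z)" .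
      qed
    qed
    also have "\<dots> = (\<integral>\<^sup>+ w. indicator E w \<partial>P)"
      by (rule P_int[symmetric]) measurable
    also have "\<dots> = emeasure P E" using E by simp
    finally show "emeasure (density Q G) E = emeasure P E" .
  qed
  have "KL P Q = enn2ereal (\<integral>\<^sup>+ w. ennreal (- ln (enn2real (a (snd w) (fst (fst w))))) \<partial>P)"
  proof (rule KL_dens[OF Q_prob _ dP GQ])
    show "sets P = sets Q" by simp
    show "AE w in P. G w = inverse (a (snd w) (fst (fst w))) \<and> 0 < a (snd w) (fst (fst w)) \<and> a (snd w) (fst (fst w)) \<le> 1"
    proof (rule AE_P)
      show "{w \<in> space S. G w = inverse (a (snd w) (fst (fst w))) \<and> 0 < a (snd w) (fst (fst w)) \<and> a (snd w) (fst (fst w)) \<le> 1} \<in> sets S"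
        by measurable
      show "AE z in PZ. AE xy in K z. G (xy, z) = inverse (a (snd (xy, z)) (fst (fst (xy, z)))) \<and> 0 < a (snd (xy, z)) (fst (fst (xy, z))) \<and> a (snd (xy, z)) (fst (fst (xy, z))) \<le> 1"
        using good
      proof eventually_elim
        fix z assume gz: "z \<in> space MZ \<and> (AE xy in K z. fst xy = T (snd xy, z)) \<and>
          emeasure (KX z) {x \<in> space MX. a z x = 0} = 0"
        then have z: "z \<in> space MZ" by simp
        from gz have nc: "emeasure (KX z) {x \<in> space MX. a z x = 0} = 0" by simp
        from gz have "AE xy in K z. fst xy = T (snd xy, z)" by simp
        then show "AE xy in K z. G (xy, z) = inverse (a (snd (xy, z)) (fst (fst (xy, z)))) \<and> 0 < a (snd (xy, z)) (fst (fst (xy, z))) \<and> a (snd (xy, z)) (fst (fst (xy, z))) \<le> 1"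
          using AE_a_pos[OF z nc]
          by eventually_elim (auto simp: G_def g_def a_le1[OF z] zero_less_iff_neq_zero)
      qed
    qed
  qed
  also have "(\<integral>\<^sup>+ w. ennreal (- ln (enn2real (a (snd w) (fst (fst w))))) \<partial>P) = (\<integral>\<^sup>+ z. F z \<partial>PZ)"
  proof -
    have hm: "(\<lambda>w. ennreal (- ln (enn2real (a (snd w) (fst (fst w)))))) \<in> borel_measurable S"
      by measurable
    show ?thesis unfolding F_def by (subst P_int[OF hm]) simp
  qed
  also have "(\<integral>\<^sup>+ z. F z \<partial>PZ) = (\<integral>\<^sup>+ z. e2ennreal (MI MX MY (K z)) * indicator Aatomic z \<partial>PZ)"
  proof (rule nn_integral_cong_AE)
    show "AE z in PZ. F z = e2ennreal (MI MX MY (K z)) * indicator Aatomic z"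
      using good
    proof eventually_elim
      fix z assume gz: "z \<in> space MZ \<and> (AE xy in K z. fst xy = T (snd xy, z)) \<and>
          emeasure (KX z) {x \<in> space MX. a z x = 0} = 0"
      then have z: "z \<in> space MZ" by simp
      have nc: "z \<notin> Acont" using gz Acont_iff[OF z] by simp
      show "F z = e2ennreal (MI MX MY (K z)) * indicator Aatomic z"
      proof (cases "z \<in> Aatomic")
        case True
        then show ?thesis using MI_good[of z] gz by simp
      next
        case False
        then have "z \<in> A0" using trichotomy[OF z _ nc] by blast
        then show ?thesis using F_A0[OF z] False by simp
      qed
    qed
  qed
  finally show ?thesis .
qed

lemma infinite_case:
  assumes A: "emeasure PZ Acont \<noteq> 0"
  shows "KL P Q = \<infinity>"
proof -
  define N where "N = {w \<in> space S. fst (fst w) = T (snd (fst w), snd w) \<and> a (snd w) (fst (fst w)) = 0}"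
  have Ns[measurable]: "N \<in> sets S" unfolding N_def by measurable
  have "emeasure Q N = (\<integral>\<^sup>+ w. indicator N w \<partial>Q)" using Ns by simp
  also have "\<dots> = (\<integral>\<^sup>+ z. \<integral>\<^sup>+ xy. indicator N (xy, z) \<partial>(KX z \<Otimes>\<^sub>M KY z) \<partial>PZ)"
    by (rule Q_int) measurable
  also have "\<dots> = (\<integral>\<^sup>+ z. 0 \<partial>PZ)"
  proof (rule nn_integral_cong)
    fix z assume "z \<in> space PZ"
    then have z: "z \<in> space MZ" by simp
    let ?Nz = "{xy \<in> space (MX \<Otimes>\<^sub>M MY). fst xy = T (snd xy, z) \<and> a z (fst xy) = 0}"
    have Nzs: "?Nz \<in> sets (KX z \<Otimes>\<^sub>M KY z)" using z sets_KXKY[OF z] by simp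
    have "(\<integral>\<^sup>+ xy. indicator N (xy, z) \<partial>(KX z \<Otimes>\<^sub>M KY z)) = (\<integral>\<^sup>+ xy. indicator ?Nz xy \<partial>(KX z \<Otimes>\<^sub>M KY z))"
      by (rule nn_integral_cong) (use z space_KXKY[OF z] in \<open>auto simp: N_def indicator_def space_pair_measure\<close>)
    also have "\<dots> = 0" using prod_null[OF z] Nzs by simp
    finally show "(\<integral>\<^sup>+ xy. indicator N (xy, z) \<partial>(KX z \<Otimes>\<^sub>M KY z)) = 0" .
  qed
  finally have QN: "emeasure Q N = 0" by simp
  have PN: "emeasure P N \<noteq> 0"
  proof
    assume P0: "emeasure P N = 0"
    have "emeasure P N = (\<integral>\<^sup>+ w. indicator N w \<partial>P)" using Ns by simp
    also have "\<dots> = (\<integral>\<^sup>+ z. \<integral>\<^sup>+ xy. indicator N (xy, z) \<partial>K z \<partial>PZ)"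
      by (rule P_int) measurable
    finally have "(\<integral>\<^sup>+ z. \<integral>\<^sup>+ xy. indicator N (xy, z) \<partial>K z \<partial>PZ) = 0" using P0 by simp
    moreover have "(\<lambda>z. \<integral>\<^sup>+ xy. indicator N (xy, z) \<partial>K z) \<in> borel_measurable PZ"
      unfolding PZ_cong by (rule inner_meas) measurable
    ultimately have "AE z in PZ. (\<integral>\<^sup>+ xy. indicator N (xy, z) \<partial>K z) = 0"
      by (simp add: nn_integral_0_iff_AE)
    then have "AE z in PZ. z \<notin> Acont"
      using AE_graph AE_space
    proof eventually_elim
      fix z assume i0: "(\<integral>\<^sup>+ xy. indicator N (xy, z) \<partial>K z) = 0"
        and gr: "AE xy in K z. fst xy = T (snd xy, z)" and "z \<in> space PZ"
      then have z: "z \<in> space MZ" by simp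
      have sK: "sets (K z) = sets (MX \<Otimes>\<^sub>M MY)" using K_space[OF z] by simp
      have spK: "space (K z) = space (MX \<Otimes>\<^sub>M MY)" using sK by (rule sets_eq_imp_space_eq)
      let ?Nz = "{xy \<in> space (MX \<Otimes>\<^sub>M MY). fst xy = T (snd xy, z) \<and> a z (fst xy) = 0}"
      let ?Cz = "{xy \<in> space (MX \<Otimes>\<^sub>M MY). a z (fst xy) = 0}"
      have Nzs: "?Nz \<in> sets (K z)" using z sK by simp
      have Czs: "?Cz \<in> sets (K z)" using z sK by simp
      have "(\<integral>\<^sup>+ xy. indicator N (xy, z) \<partial>K z) = (\<integral>\<^sup>+ xy. indicator ?Nz xy \<partial>K z)"
        by (rule nn_integral_cong) (use z spK in \<open>auto simp: N_def indicator_def space_pair_measure\<close>)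
      also have "\<dots> = emeasure (K z) ?Nz" using Nzs by simp
      also have "\<dots> = emeasure (K z) ?Cz"
        by (rule emeasure_eq_AE[OF _ Nzs Czs]) (use gr in \<open>eventually_elim, auto\<close>)
      also have "\<dots> = emeasure (KX z) {x \<in> space MX. a z x = 0}"
        unfolding KX_def using z
        by (subst emeasure_distr) (auto simp: measurable_cong_sets[OF sK refl] spK space_pair_measure intro!: arg_cong[where f="emeasure (K z)"])
      finally show "z \<notin> Acont" using i0 Acont_iff[OF z] by simp
    qed
    then have "emeasure PZ Acont = 0"
      using Acont_sets by (subst (asm) AE_iff_measurable[OF _ Acont_eq]) auto
    with A show False by simp
  qed
  have "\<not> absolutely_continuous Q P"
    using QN PN Ns absolutely_continuousD[of Q P N] by auto
  then show ?thesis unfolding KL_def by simp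
qed

lemma main_result:
  "A0 \<in> sets MZ \<and> Aatomic \<in> sets MZ \<and> Acont \<in> sets MZ \<and>
   KL P Q = (if emeasure PZ Acont = 0
             then enn2ereal (\<integral>\<^sup>+ z. e2ennreal (MI MX MY (K z)) * indicator Aatomic z \<partial>PZ)
             else \<infinity>) \<and>
   (emeasure PZ A0 = 1 \<longrightarrow> KL P Q = 0)"
proof (intro conjI impI)
  show "A0 \<in> sets MZ" by (rule A0_sets)
  show "Aatomic \<in> sets MZ" by (rule Aatomic_sets)
  show "Acont \<in> sets MZ" by (rule Acont_sets)
  show "KL P Q = (if emeasure PZ Acont = 0
             then enn2ereal (\<integral>\<^sup>+ z. e2ennreal (MI MX MY (K z)) * indicator Aatomic z \<partial>PZ)
             else \<infinity>)"
    using finite_case infinite_case by auto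
next
  assume A1: "emeasure PZ A0 = 1"
  interpret PZp: prob_space PZ using PZ_prob by (simp add: space_prob_algebra)
  have A0s: "A0 \<in> sets PZ" using A0_sets by simp
  have "emeasure PZ (space PZ - A0) = emeasure PZ (space PZ) - emeasure PZ A0"
    by (rule emeasure_compl[OF A0s]) simp
  moreover have "emeasure PZ (space PZ) = 1" by (rule PZp.emeasure_space_1)
  ultimately have "emeasure PZ (space PZ - A0) = 0" using A1 by simp
  then have aeA0: "AE z in PZ. z \<in> A0"
    using A0s by (subst AE_iff_measurable[where N="space PZ - A0"]) auto
  then have "AE z in PZ. z \<notin> Acont" by (rule eventually_mono) (rule A0_not_cont)
  then have c0: "emeasure PZ Acont = 0"
    using Acont_sets by (subst (asm) AE_iff_measurable[OF _ Acont_eq]) auto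
  have "(\<integral>\<^sup>+ z. e2ennreal (MI MX MY (K z)) * indicator Aatomic z \<partial>PZ) = (\<integral>\<^sup>+ z. 0 \<partial>PZ)"
    by (rule nn_integral_cong_AE) (use aeA0 in \<open>eventually_elim, auto simp: A0_def Aatomic_def\<close>)
  then show "KL P Q = 0" using finite_case[OF c0] by (simp add: zero_ennreal.rep_eq)
qed

end


theorem theorem3p3:
  fixes M :: "'w measure"
    and MX :: "'x measure" and MY :: "'y measure" and MZ :: "'z measure"
    and X :: "'w \<Rightarrow> 'x" and Y :: "'w \<Rightarrow> 'y" and Z :: "'w \<Rightarrow> 'z"
    and T :: "'y \<times> 'z \<Rightarrow> 'x"
    and fX :: "'x \<Rightarrow> 'px::polish_space" and fY :: "'y \<Rightarrow> 'py::polish_space"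
    and fZ :: "'z \<Rightarrow> 'pz::polish_space"
    and K :: "'z \<Rightarrow> ('x \<times> 'y) measure"
  assumes "prob_space M"
    and stdX: "standard_via MX fX" and stdY: "standard_via MY fY" and stdZ: "standard_via MZ fZ"
    and Y_rv: "Y \<in> M \<rightarrow>\<^sub>M MY" and Z_rv: "Z \<in> M \<rightarrow>\<^sub>M MZ"
    and T_meas: "T \<in> MY \<Otimes>\<^sub>M MZ \<rightarrow>\<^sub>M MX"
    and X_def: "\<forall>\<omega>\<in>space M. X \<omega> = T (Y \<omega>, Z \<omega>)"
    \<comment> \<open>K is a regular conditional distribution of (X,Y) given Z, i.e. the disintegration
        of P_XYZ with respect to P_Z\<close>
    and K_meas: "K \<in> MZ \<rightarrow>\<^sub>M prob_algebra (MX \<Otimes>\<^sub>M MY)"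
    and K_disint: "\<forall>B\<in>sets (MX \<Otimes>\<^sub>M MY). \<forall>C\<in>sets MZ.
        emeasure M {\<omega>\<in>space M. (X \<omega>, Y \<omega>) \<in> B \<and> Z \<omega> \<in> C}
          = (\<integral>\<^sup>+ z. emeasure (K z) B * indicator C z \<partial>distr M MZ Z)"
  defines "PZ \<equiv> distr M MZ Z"
    and "A0 \<equiv> {z\<in>space MZ. \<exists>x\<in>space MX. emeasure (distr (K z) MX fst) {x} = 1}"
    and "Aatomic \<equiv> {z\<in>space MZ. \<not> (\<exists>x\<in>space MX. emeasure (distr (K z) MX fst) {x} = 1) \<and>
           (\<exists>B\<in>sets MX. countable B \<and> \<not> (\<exists>x. B = {x}) \<and> emeasure (distr (K z) MX fst) B = 1)}"
    and "Acont \<equiv> {z\<in>space MZ. \<exists>B\<in>sets MX. emeasure (distr (K z) MX fst) B > 0 \<and>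
           (\<forall>x\<in>B. emeasure (distr (K z) MX fst) {x} = 0)}"
    and "CMI \<equiv> KL (distr M ((MX \<Otimes>\<^sub>M MY) \<Otimes>\<^sub>M MZ) (\<lambda>\<omega>. ((X \<omega>, Y \<omega>), Z \<omega>)))
                  (cond_prod_measure MX MY MZ (distr M MZ Z) K)"
  shows "A0 \<in> sets MZ \<and> Aatomic \<in> sets MZ \<and> Acont \<in> sets MZ \<and>
         CMI = (if emeasure PZ Acont = 0
                then enn2ereal (\<integral>\<^sup>+ z. e2ennreal (MI MX MY (K z)) * indicator Aatomic z \<partial>PZ)
                else \<infinity>) \<and>
         (emeasure PZ A0 = 1 \<longrightarrow> CMI = 0)"
proof -
  interpret L: tsetup M MX MY MZ X Y Z T fX K
    by (rule tsetup.intro[OF assms(1) stdX Y_rv Z_rv T_meas X_def K_meas K_disint])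
  have eA0: "A0 = L.A0" unfolding A0_def L.A0_def L.a_def L.KX_def ..
  have eAc: "Acont = L.Acont" unfolding Acont_def L.Acont_def L.a_def L.KX_def ..
  have eAa: "Aatomic = L.Aatomic" unfolding Aatomic_def L.Aatomic_def L.a_def L.KX_def ..
  have ePZ: "PZ = L.PZ" unfolding PZ_def L.PZ_def ..
  have eC: "CMI = KL L.P L.Q" unfolding CMI_def L.P_def L.Q_def L.PZ_def ..
  show ?thesis unfolding eA0 eAc eAa ePZ eC by (rule L.main_result)
qed

end
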